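(* Let $A$ be a bounded linear operator on a complex Hilbert space $\mathcal H\neq\{0\}$. Then $W_0(A)\cap\partial W(A)\neq\emptyset$ if and only if $A$ is normaloid.
   Context: The numerical range of $A$ is $W(A)=\{\langle Ax,x\rangle : x\in\mathcal H,\ \|x\|=1\}$, and $\partial W(A)$ denotes its boundary in $\mathbb C$. The maximal numerical range $W_0(A)$ is the set of all $\lambda\in\mathbb C$ for which there exist unit vectors $x_n\in\mathcal H$ with $\|Ax_n\|\to\|A\|$ and $\langle Ax_n,x_n\rangle\to\lambda$. The operator $A$ is called normaloid if $\sigma(A)\cap\mathcal C_A\neq\emptyset$, where $\sigma(A)$ is the spectrum and $\mathcal C_A=\{z\in\mathbb C: |z|=\|A\|\}$; equivalently, if the closure of $W(A)$ meets $\mathcal C_A$, i.e. the numerical radius $\sup\{|z|: z\in W(A)\}$ equals $\|A\|$. *)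

theory Defs
  imports "HOL-Analysis.Analysis"
begin

class complex_hilbert = banach +
  fixes scaleC :: "complex \<Rightarrow> 'a \<Rightarrow> 'a"
    and cinner :: "'a \<Rightarrow> 'a \<Rightarrow> complex"
  assumes scaleC_of_real: "scaleC (of_real r) x = scaleR r x"
    and scaleC_add_right: "scaleC a (x + y) = scaleC a x + scaleC a y"
    and scaleC_add_left: "scaleC (a + b) x = scaleC a x + scaleC b x"
    and scaleC_scaleC: "scaleC a (scaleC b x) = scaleC (a * b) x"
    and scaleC_one: "scaleC 1 x = x"
    and cinner_add_left: "cinner (x + y) z = cinner x z + cinner y z"
    and cinner_scaleC_left: "cinner (scaleC a x) y = a * cinner x y"
    and cinner_commute: "cinner y x = cnj (cinner x y)"
    and cinner_self_norm: "cinner x x = of_real ((norm x)\<^sup>2)"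

definition bounded_clinear_op :: "('a::complex_hilbert \<Rightarrow> 'a) \<Rightarrow> bool" where
  "bounded_clinear_op A \<longleftrightarrow> bounded_linear A \<and> (\<forall>c x. A (scaleC c x) = scaleC c (A x))"

definition numerical_range :: "('a::complex_hilbert \<Rightarrow> 'a) \<Rightarrow> complex set" where
  "numerical_range A = {cinner (A x) x | x. norm x = 1}"

definition max_numerical_range :: "('a::complex_hilbert \<Rightarrow> 'a) \<Rightarrow> complex set" where
  "max_numerical_range A = {l. \<exists>x :: nat \<Rightarrow> 'a. (\<forall>n. norm (x n) = 1)
       \<and> (\<lambda>n. norm (A (x n))) \<longlonglongrightarrow> onorm A
       \<and> (\<lambda>n. cinner (A (x n)) (x n)) \<longlonglongrightarrow> l}"

definition op_spectrum :: "('a::complex_hilbert \<Rightarrow> 'a) \<Rightarrow> complex set" where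
  "op_spectrum A = {l. \<not> (\<exists>B. bounded_clinear_op B
       \<and> (\<forall>x. B (A x - scaleC l x) = x) \<and> (\<forall>x. A (B x) - scaleC l (B x) = x))}"

definition normaloid :: "('a::complex_hilbert \<Rightarrow> 'a) \<Rightarrow> bool" where
  "normaloid A \<longleftrightarrow> op_spectrum A \<inter> {z. cmod z = onorm A} \<noteq> {}"

end

theory Submission
  imports Defs
begin


section \<open>Basic Hilbert space facts\<close>


lemma scaleC_zero_left [simp]: "scaleC 0 (x::'a::complex_hilbert) = 0"
  using scaleC_of_real[of 0 x] by simp

lemma cinner_add_right: "cinner (x::'a::complex_hilbert) (y + z) = cinner x y + cinner x z"
  by (metis cinner_commute cinner_add_left complex_cnj_add)

lemma cinner_scaleC_right: "cinner (x::'a::complex_hilbert) (scaleC a y) = cnj a * cinner x y"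
  by (metis cinner_commute cinner_scaleC_left complex_cnj_mult)

lemma cinner_zero_left [simp]: "cinner 0 (y::'a::complex_hilbert) = 0"
  using cinner_add_left[of 0 0 y] by simp

lemma cinner_zero_right [simp]: "cinner (y::'a::complex_hilbert) 0 = 0"
  using cinner_add_right[of y 0 0] by simp

lemma cinner_minus_left: "cinner (- (x::'a::complex_hilbert)) y = - cinner x y"
  using cinner_add_left[of x "-x" y] by (simp add: add_eq_0_iff)

lemma cinner_minus_right: "cinner (y::'a::complex_hilbert) (- x) = - cinner y x"
  using cinner_add_right[of y x "-x"] by (simp add: add_eq_0_iff)

lemma cinner_diff_left: "cinner ((x::'a::complex_hilbert) - z) y = cinner x y - cinner z y"
  using cinner_add_left[of x "-z" y] by (simp add: cinner_minus_left)

lemma cinner_diff_right: "cinner (y::'a::complex_hilbert) (x - z) = cinner y x - cinner y z"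
  using cinner_add_right[of y x "-z"] by (simp add: cinner_minus_right)

lemma scaleC_zero_right [simp]: "scaleC a (0::'a::complex_hilbert) = 0"
  using scaleC_add_right[of a 0 0] by simp

lemma scaleC_minus_left: "scaleC (- a) (x::'a::complex_hilbert) = - scaleC a x"
  using scaleC_add_left[of a "-a" x] by (simp add: add_eq_0_iff)

lemma scaleC_minus_right: "scaleC a (- (x::'a::complex_hilbert)) = - scaleC a x"
  using scaleC_add_right[of a x "-x"] by (simp add: add_eq_0_iff)

lemma scaleC_diff_right: "scaleC a ((x::'a::complex_hilbert) - y) = scaleC a x - scaleC a y"
  using scaleC_add_right[of a x "-y"] by (simp add: scaleC_minus_right)

lemma scaleC_diff_left: "scaleC (a - b) (x::'a::complex_hilbert) = scaleC a x - scaleC b x"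
  using scaleC_add_left[of a "-b" x] by (simp add: scaleC_minus_left)

lemma scaleR_scaleC: "scaleR r (x::'a::complex_hilbert) = scaleC (of_real r) x"
  by (simp add: scaleC_of_real)

lemma Re_cinner_self: "Re (cinner (x::'a::complex_hilbert) x) = (norm x)\<^sup>2"
  by (simp add: cinner_self_norm)

lemma cinner_self_real: "cinner (x::'a::complex_hilbert) x = of_real (Re (cinner x x))"
  by (simp add: cinner_self_norm)

lemma norm_scaleC: "norm (scaleC c (x::'a::complex_hilbert)) = cmod c * norm x"
proof -
  have "(norm (scaleC c x))\<^sup>2 = Re (cinner (scaleC c x) (scaleC c x))"
    by (simp add: Re_cinner_self)
  also have "\<dots> = Re (c * cnj c * cinner x x)"
    by (simp only: cinner_scaleC_left cinner_scaleC_right mult.assoc mult.left_commute)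
  also have "c * cnj c = of_real ((cmod c)\<^sup>2)"
    using complex_norm_square[of c] by simp
  also have "Re (of_real ((cmod c)\<^sup>2) * cinner x x) = (cmod c * norm x)\<^sup>2"
    by (simp add: cinner_self_norm power_mult_distrib)
  finally show ?thesis
    by (simp add: power2_eq_iff_nonneg)
qed


lemma cinner_scaleC_scaleC: "cinner (scaleC a (x::'a::complex_hilbert)) (scaleC b y) = a * cnj b * cinner x y"
  by (simp add: cinner_scaleC_left cinner_scaleC_right)

lemma cinner_commute': "cinner (x::'a::complex_hilbert) y = cnj (cinner y x)"
  by (metis cinner_commute)

lemma psd_cs_basic:
  fixes F :: "'a::complex_hilbert \<Rightarrow> 'a \<Rightarrow> complex"
  assumes addL: "\<And>u1 u2 v. F (u1 + u2) v = F u1 v + F u2 v"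
    and sclL: "\<And>c u v. F (scaleC c u) v = c * F u v"
    and herm: "\<And>u v. F v u = cnj (F u v)"
    and psd: "\<And>u. 0 \<le> Re (F u u)"
    and M: "Re (F v v) \<le> M" "0 < M"
  shows "(cmod (F u v))\<^sup>2 \<le> M * Re (F u u)"
proof -
  have addR: "F u (v1 + v2) = F u v1 + F u v2" for u v1 v2
    using addL[of v1 v2 u] herm by (metis complex_cnj_add)
  have sclR: "F u (scaleC c v) = cnj c * F u v" for c u v
    using sclL[of c v u] herm by (metis complex_cnj_mult)
  define b where "b = F u v"
  define t where "t = 1 / M"
  define w where "w = u + scaleC (- (of_real t * b)) v"
  have "F w w = F u u + ((- (of_real t * b)) * F v u + cnj (- (of_real t * b)) *
      (F u v + (- (of_real t * b)) * F v v))"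
    unfolding w_def by (simp only: addL addR sclL sclR add.assoc)
  also have "F v u = cnj b" using herm[of u v] b_def by simp
  finally have Fw: "F w w = F u u - of_real t * (cnj b * b) - of_real t * (b * cnj b)
      + of_real t * of_real t * (b * cnj b) * F v v"
    using b_def by (simp add: algebra_simps)
  have bb: "b * cnj b = of_real ((cmod b)\<^sup>2)" using complex_norm_square[of b] by simp
  have "0 \<le> Re (F w w)" by (rule psd)
  also have "Re (F w w) = Re (F u u) - 2 * t * (cmod b)\<^sup>2 + t * t * (cmod b)\<^sup>2 * Re (F v v)"
    unfolding Fw bb by (simp add: mult.commute[of "cnj b" b] bb)
  also have "\<dots> \<le> Re (F u u) - 2 * t * (cmod b)\<^sup>2 + t * t * (cmod b)\<^sup>2 * M"
    using M by (intro add_left_mono mult_left_mono) (auto simp: t_def)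
  also have "\<dots> = Re (F u u) - (cmod b)\<^sup>2 / M"
    using M by (simp add: t_def field_simps power2_eq_square)
  finally have "(cmod b)\<^sup>2 / M \<le> Re (F u u)" by simp
  then show ?thesis using M by (simp add: b_def pos_divide_le_eq mult.commute)
qed

lemma cauchy_schwarz: "cmod (cinner (x::'a::complex_hilbert) y) \<le> norm x * norm y"
proof (cases "y = 0")
  case True then show ?thesis by simp
next
  case False
  have "(cmod (cinner x y))\<^sup>2 \<le> (norm y)\<^sup>2 * Re (cinner x x)"
  proof (rule psd_cs_basic[where F=cinner])
    show "cinner (u1 + u2) v = cinner u1 v + cinner u2 v" for u1 u2 v :: 'a by (rule cinner_add_left)
    show "cinner (scaleC c u) v = c * cinner u v" for c and u v :: 'a by (rule cinner_scaleC_left)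
    show "cinner v u = cnj (cinner u v)" for u v :: 'a by (rule cinner_commute)
    show "0 \<le> Re (cinner u u)" for u :: 'a by (simp add: Re_cinner_self)
    show "Re (cinner y y) \<le> (norm y)\<^sup>2" by (simp add: Re_cinner_self)
    show "0 < (norm y)\<^sup>2" using False by simp
  qed
  also have "\<dots> = (norm x * norm y)\<^sup>2" by (simp add: Re_cinner_self power_mult_distrib)
  finally show ?thesis by (simp add: power2_le_iff_abs_le)
qed

section \<open>Operators\<close>

lemma bco_add: "bounded_clinear_op A \<Longrightarrow> A (x + y) = A x + A y"
  unfolding bounded_clinear_op_def by (simp add: linear_simps)

lemma bco_scaleC: "bounded_clinear_op A \<Longrightarrow> A (scaleC c x) = scaleC c (A x)"
  unfolding bounded_clinear_op_def by simp

lemma bco_diff: "bounded_clinear_op A \<Longrightarrow> A (x - y) = A x - A y"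
  unfolding bounded_clinear_op_def by (simp add: linear_simps)

lemma bco_zero: "bounded_clinear_op A \<Longrightarrow> A 0 = 0"
  unfolding bounded_clinear_op_def by (simp add: linear_simps)

lemma bco_norm: "bounded_clinear_op A \<Longrightarrow> norm (A x) \<le> onorm A * norm x"
  unfolding bounded_clinear_op_def by (simp add: onorm)

lemma bco_onorm_nonneg: "bounded_clinear_op A \<Longrightarrow> 0 \<le> onorm A"
  unfolding bounded_clinear_op_def by (simp add: onorm_pos_le)

lemma bco_bl: "bounded_clinear_op A \<Longrightarrow> bounded_linear A"
  unfolding bounded_clinear_op_def by simp

lemma bco_cinner_le: "bounded_clinear_op A \<Longrightarrow> norm x = 1 \<Longrightarrow> cmod (cinner (A x) x) \<le> onorm A"
  using cauchy_schwarz[of "A x" x] bco_norm[of A x] by simp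



lemma cnj_cinner [simp]: "cnj (cinner (x::'a::complex_hilbert) y) = cinner y x"
  by (metis cinner_commute)

lemmas lin_simps = cinner_add_left cinner_add_right cinner_diff_left cinner_diff_right
  cinner_scaleC_left cinner_scaleC_right cinner_minus_left cinner_minus_right

lemma form_tendsto0:
  fixes F :: "'a::complex_hilbert \<Rightarrow> 'a \<Rightarrow> complex"
  assumes addL: "\<And>u1 u2 v. F (u1 + u2) v = F u1 v + F u2 v"
    and sclL: "\<And>c u v. F (scaleC c u) v = c * F u v"
    and herm: "\<And>u v. F v u = cnj (F u v)"
    and psd: "\<And>u. 0 \<le> Re (F u u)"
    and bnd: "\<And>n. Re (F (v n) (v n)) \<le> M" and M: "0 < M"
    and lim: "(\<lambda>n. Re (F (u n) (u n))) \<longlonglongrightarrow> 0"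
  shows "(\<lambda>n. F (u n) (v n)) \<longlonglongrightarrow> 0"
proof (rule Lim_null_comparison)
  show "\<forall>\<^sub>F n in sequentially. norm (F (u n) (v n)) \<le> sqrt (M * Re (F (u n) (u n)))"
  proof (rule always_eventually, rule allI)
    fix n
    have "(cmod (F (u n) (v n)))\<^sup>2 \<le> M * Re (F (u n) (u n))"
      by (rule psd_cs_basic[OF addL sclL herm psd bnd[of n] M])
    then show "norm (F (u n) (v n)) \<le> sqrt (M * Re (F (u n) (u n)))"
      by (simp add: real_le_rsqrt)
  qed
  show "(\<lambda>n. sqrt (M * Re (F (u n) (u n)))) \<longlonglongrightarrow> 0"
    using tendsto_real_sqrt[OF tendsto_mult_left_zero[OF lim, of M]] by (simp add: mult.commute)
qed

lemma lower_extend: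
  fixes B :: "'a::complex_hilbert \<Rightarrow> 'a"
  assumes B: "bounded_clinear_op B"
    and low: "\<And>u. norm u = 1 \<Longrightarrow> e \<le> norm (B u - scaleC m u)"
  shows "e * norm z \<le> norm (B z - scaleC m z)"
proof (cases "z = 0")
  case True then show ?thesis by (simp add: bco_zero[OF B])
next
  case False
  define u where "u = scaleC (of_real (1 / norm z)) z"
  have nu: "norm u = 1" using False by (simp add: u_def norm_scaleC norm_divide)
  have "B u - scaleC m u = scaleC (of_real (1 / norm z)) (B z - scaleC m z)"
    by (simp add: u_def bco_scaleC[OF B] scaleC_diff_right scaleC_scaleC mult.commute)
  then have "norm (B u - scaleC m u) = norm (B z - scaleC m z) / norm z"
    by (simp add: norm_scaleC norm_divide)
  with low[OF nu] False show ?thesis by (simp add: pos_le_divide_eq)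
qed

lemma supp_extend:
  fixes B :: "'a::complex_hilbert \<Rightarrow> 'a"
  assumes B: "bounded_clinear_op B"
    and supp: "\<And>v. norm v = 1 \<Longrightarrow> Re (cinner (B v) v) \<le> a"
  shows "Re (cinner (B z) z) \<le> a * (norm z)\<^sup>2"
proof (cases "z = 0")
  case True then show ?thesis by (simp add: bco_zero[OF B])
next
  case False
  define u where "u = scaleC (of_real (1 / norm z)) z"
  have nu: "norm u = 1" using False by (simp add: u_def norm_scaleC norm_divide)
  have "cinner (B u) u = of_real (1 / norm z) * of_real (1 / norm z) * cinner (B z) z"
    by (simp add: u_def bco_scaleC[OF B] cinner_scaleC_left cinner_scaleC_right)
  then have "Re (cinner (B u) u) = Re (cinner (B z) z) / (norm z)\<^sup>2"
    by (simp add: power2_eq_square)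
  with supp[OF nu] False show ?thesis by (simp add: pos_divide_le_eq mult.commute)
qed


lemma core:
  fixes B :: "'a::complex_hilbert \<Rightarrow> 'a" and x :: "nat \<Rightarrow> 'a" and a N :: real
  assumes B: "bounded_clinear_op B" and N: "N = onorm B"
    and unit: "\<And>n. norm (x n) = 1"
    and lim1: "(\<lambda>n. norm (B (x n))) \<longlonglongrightarrow> N"
    and lim2: "(\<lambda>n. Re (cinner (B (x n)) (x n))) \<longlonglongrightarrow> a"
    and supp: "\<And>v. norm v = 1 \<Longrightarrow> Re (cinner (B v) v) \<le> a"
  shows "\<exists>m. cmod m = N \<and> (\<forall>e>0. \<exists>u. norm u = 1 \<and> norm (B u - scaleC m u) < e)"
proof -
  note Badd = bco_add[OF B] and Bscl = bco_scaleC[OF B] and Bdiff = bco_diff[OF B]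
  have N0: "0 \<le> N" using bco_onorm_nonneg[OF B] N by simp
  have Bn: "norm (B v) \<le> N * norm v" for v using bco_norm[OF B] N by simp
  have cB: "cmod (cinner (B v) v) \<le> N * (norm v)\<^sup>2" for v
  proof -
    have "cmod (cinner (B v) v) \<le> norm (B v) * norm v" by (rule cauchy_schwarz)
    also have "\<dots> \<le> N * norm v * norm v" by (rule mult_right_mono[OF Bn norm_ge_zero])
    finally show ?thesis by (simp add: power2_eq_square mult.assoc)
  qed
  have suppg: "Re (cinner (B v) v) \<le> a * (norm v)\<^sup>2" for v
    by (rule supp_extend[OF B supp])
  have hx: "cinner (x n) (x n) = 1" for n using unit[of n] by (simp add: cinner_self_norm)
  have aN: "\<bar>a\<bar> \<le> N"
  proof -
    have "a \<le> N"
    proof (rule LIMSEQ_le_const2[OF lim2], intro exI allI impI)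
      fix n
      show "Re (cinner (B (x n)) (x n)) \<le> N"
        using order_trans[OF complex_Re_le_cmod cB[of "x n"]] unit[of n] by simp
    qed
    moreover have "- N \<le> a"
    proof (rule LIMSEQ_le_const[OF lim2], intro exI allI impI)
      fix n
      have "- Re (cinner (B (x n)) (x n)) \<le> cmod (cinner (B (x n)) (x n))"
        using abs_Re_le_cmod[of "cinner (B (x n)) (x n)"] by linarith
      also have "\<dots> \<le> N" using cB[of "x n"] unit[of n] by simp
      finally show "- N \<le> Re (cinner (B (x n)) (x n))" by simp
    qed
    ultimately show ?thesis by simp
  qed
  define Q where "Q = (\<lambda>u v. of_real a * cinner u v - (cinner (B u) v + cinner u (B v)) / 2)"
  define P where "P = (\<lambda>u v. of_real (N\<^sup>2) * cinner u v - cinner (B u) (B v))"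
  have QaddL: "Q (u1 + u2) v = Q u1 v + Q u2 v" for u1 u2 v
    unfolding Q_def by (simp add: Badd lin_simps field_simps)
  have QsclL: "Q (scaleC c u) v = c * Q u v" for c u v
    unfolding Q_def by (simp add: Bscl lin_simps field_simps)
  have Qherm: "Q v u = cnj (Q u v)" for u v
    unfolding Q_def by (simp add: field_simps)
  have ReQ: "Re (Q u u) = a * (norm u)\<^sup>2 - Re (cinner (B u) u)" for u
  proof -
    have "Re (cinner u (B u)) = Re (cinner (B u) u)"
      by (subst cinner_commute[where x="B u" and y=u]) (simp del: cnj_cinner)
    then show ?thesis unfolding Q_def by (simp add: Re_cinner_self)
  qed
  have Qpsd: "0 \<le> Re (Q u u)" for u using ReQ[of u] suppg[of u] by simp
  have Qbnd: "Re (Q v v) \<le> (\<bar>a\<bar> + N) * (norm v)\<^sup>2" for v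
  proof -
    have "- Re (cinner (B v) v) \<le> N * (norm v)\<^sup>2"
      using abs_Re_le_cmod[of "cinner (B v) v"] cB[of v] by linarith
    moreover have "a * (norm v)\<^sup>2 \<le> \<bar>a\<bar> * (norm v)\<^sup>2"
      by (rule mult_right_mono) auto
    ultimately show ?thesis using ReQ[of v] by (simp add: algebra_simps)
  qed
  have PaddL: "P (u1 + u2) v = P u1 v + P u2 v" for u1 u2 v
    unfolding P_def by (simp add: Badd lin_simps field_simps)
  have PsclL: "P (scaleC c u) v = c * P u v" for c u v
    unfolding P_def by (simp add: Bscl lin_simps field_simps)
  have Pherm: "P v u = cnj (P u v)" for u v
    unfolding P_def by (simp add: field_simps)
  have ReP: "Re (P u u) = N\<^sup>2 * (norm u)\<^sup>2 - (norm (B u))\<^sup>2" for u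
    unfolding P_def by (simp add: Re_cinner_self)
  have Ppsd: "0 \<le> Re (P u u)" for u
  proof -
    have "(norm (B u))\<^sup>2 \<le> (N * norm u)\<^sup>2" by (rule power_mono[OF Bn norm_ge_zero])
    then show ?thesis using ReP[of u] by (simp add: power_mult_distrib)
  qed
  have Pbnd: "Re (P v v) \<le> N\<^sup>2 * (norm v)\<^sup>2" for v using ReP[of v] by simp
  define w where "w n = B (x n) - scaleC (of_real a) (x n)" for n
  define y where "y n = B (B (x n)) - scaleC (of_real (2 * a)) (B (x n)) + scaleC (of_real (N\<^sup>2)) (x n)" for n
  define K where "K = N + \<bar>a\<bar>"
  define Y where "Y = 2 * N\<^sup>2 + 2 * \<bar>a\<bar> * N"
  have K0: "0 \<le> K" using N0 by (simp add: K_def)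
  have Y0: "0 \<le> Y" using N0 by (simp add: Y_def)
  have wn: "norm (w n) \<le> K" for n
  proof -
    have "norm (w n) \<le> norm (B (x n)) + norm (scaleC (of_real a) (x n))"
      unfolding w_def by (rule norm_triangle_ineq4)
    also have "\<dots> \<le> N + \<bar>a\<bar>" using Bn[of "x n"] unit[of n] by (simp add: norm_scaleC)
    finally show ?thesis by (simp add: K_def)
  qed
  have yn: "norm (y n) \<le> Y" for n
  proof -
    have "norm (y n) \<le> norm (B (B (x n)) - scaleC (of_real (2 * a)) (B (x n))) + norm (scaleC (of_real (N\<^sup>2)) (x n))"
      unfolding y_def by (rule norm_triangle_ineq)
    also have "\<dots> \<le> norm (B (B (x n))) + norm (scaleC (of_real (2 * a)) (B (x n))) + norm (scaleC (of_real (N\<^sup>2)) (x n))"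
      by (simp add: norm_triangle_ineq4)
    also have "\<dots> = norm (B (B (x n))) + 2 * \<bar>a\<bar> * norm (B (x n)) + N\<^sup>2"
      using unit[of n] N0 by (simp add: norm_scaleC norm_power)
    also have "\<dots> \<le> N * N + 2 * \<bar>a\<bar> * N + N\<^sup>2"
    proof -
      have b1: "norm (B (x n)) \<le> N" using Bn[of "x n"] unit[of n] by simp
      have "norm (B (B (x n))) \<le> N * norm (B (x n))" by (rule Bn)
      also have "\<dots> \<le> N * N" by (rule mult_left_mono[OF b1 N0])
      finally have b2: "norm (B (B (x n))) \<le> N * N" .
      have "2 * \<bar>a\<bar> * norm (B (x n)) \<le> 2 * \<bar>a\<bar> * N" by (rule mult_left_mono[OF b1]) simp
      with b2 show ?thesis by linarith
    qed
    finally show ?thesis by (simp add: Y_def power2_eq_square)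
  qed
  have eQ: "(\<lambda>n. Re (Q (x n) (x n))) \<longlonglongrightarrow> 0"
  proof -
    have "(\<lambda>n. a - Re (cinner (B (x n)) (x n))) \<longlonglongrightarrow> a - a"
      by (intro tendsto_intros lim2)
    then show ?thesis using ReQ unit by simp
  qed
  have eP: "(\<lambda>n. Re (P (x n) (x n))) \<longlonglongrightarrow> 0"
  proof -
    have "(\<lambda>n. N\<^sup>2 - (norm (B (x n)))\<^sup>2) \<longlonglongrightarrow> N\<^sup>2 - N\<^sup>2"
      by (intro tendsto_intros lim1)
    then show ?thesis using ReP unit by simp
  qed
  have QbndS: "Re (Q (s n) (s n)) \<le> (\<bar>a\<bar> + N) * R\<^sup>2 + 1" if "\<And>n. norm (s n) \<le> R" for s :: "nat \<Rightarrow> 'a" and R n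
  proof -
    have "(norm (s n))\<^sup>2 \<le> R\<^sup>2" by (rule power_mono[OF that norm_ge_zero])
    then have "(\<bar>a\<bar> + N) * (norm (s n))\<^sup>2 \<le> (\<bar>a\<bar> + N) * R\<^sup>2"
      by (rule mult_left_mono) (use N0 in simp)
    then show ?thesis using Qbnd[of "s n"] by simp
  qed
  have PbndS: "Re (P (s n) (s n)) \<le> N\<^sup>2 * R\<^sup>2 + 1" if "\<And>n. norm (s n) \<le> R" for s :: "nat \<Rightarrow> 'a" and R n
  proof -
    have "(norm (s n))\<^sup>2 \<le> R\<^sup>2" by (rule power_mono[OF that norm_ge_zero])
    then have "N\<^sup>2 * (norm (s n))\<^sup>2 \<le> N\<^sup>2 * R\<^sup>2"
      by (rule mult_left_mono) simp
    then show ?thesis using Pbnd[of "s n"] by simp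
  qed
  have pos1: "0 < (\<bar>a\<bar> + N) * R\<^sup>2 + 1" for R using N0 by (simp add: add_nonneg_pos)
  have pos2: "0 < N\<^sup>2 * R\<^sup>2 + 1" for R by (simp add: add_nonneg_pos)
  have QXW: "(\<lambda>n. Q (x n) (w n)) \<longlonglongrightarrow> 0"
    by (rule form_tendsto0[OF QaddL QsclL Qherm Qpsd QbndS[OF wn] pos1 eQ])
  have PXW: "(\<lambda>n. P (x n) (w n)) \<longlonglongrightarrow> 0"
    by (rule form_tendsto0[OF PaddL PsclL Pherm Ppsd PbndS[OF wn] pos2 eP])
  have claim1c: "Q (w n) (w n) = of_real (N\<^sup>2 - a\<^sup>2) * Q (x n) (x n)
      + (P (x n) (w n) + cnj (P (x n) (w n))) / 2 - of_real a * (Q (x n) (w n) + cnj (Q (x n) (w n)))" for n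
    unfolding Q_def P_def w_def by (simp add: Bdiff Bscl lin_simps hx field_simps power2_eq_square)
  have claim1: "Re (Q (w n) (w n)) = (N\<^sup>2 - a\<^sup>2) * Re (Q (x n) (x n))
      + Re (P (x n) (w n)) - 2 * a * Re (Q (x n) (w n))" for n
    using arg_cong[OF claim1c[of n], of Re] by simp
  have QWW: "(\<lambda>n. Re (Q (w n) (w n))) \<longlonglongrightarrow> 0"
  proof -
    have "(\<lambda>n. (N\<^sup>2 - a\<^sup>2) * Re (Q (x n) (x n)) + Re (P (x n) (w n)) - 2 * a * Re (Q (x n) (w n)))
        \<longlonglongrightarrow> (N\<^sup>2 - a\<^sup>2) * 0 + Re 0 - 2 * a * Re 0"
      by (intro tendsto_intros eQ QXW PXW)
    then show ?thesis by (simp add: claim1)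
  qed
  have QWY: "(\<lambda>n. Q (w n) (y n)) \<longlonglongrightarrow> 0"
    by (rule form_tendsto0[OF QaddL QsclL Qherm Qpsd QbndS[OF yn] pos1 QWW])
  have QXY: "(\<lambda>n. Q (x n) (y n)) \<longlonglongrightarrow> 0"
    by (rule form_tendsto0[OF QaddL QsclL Qherm Qpsd QbndS[OF yn] pos1 eQ])
  have PXY: "(\<lambda>n. P (x n) (y n)) \<longlonglongrightarrow> 0"
    by (rule form_tendsto0[OF PaddL PsclL Pherm Ppsd PbndS[OF yn] pos2 eP])
  have claim2: "cinner (y n) v = P (x n) v - of_real (2 * a) * Q (x n) v - 2 * Q (w n) v" for n v
    unfolding Q_def P_def w_def y_def by (simp add: Bdiff Bscl Badd lin_simps field_simps power2_eq_square)
  have "(\<lambda>n. cinner (y n) (y n)) \<longlonglongrightarrow> 0 - of_real (2 * a) * 0 - 2 * 0"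
    unfolding claim2 by (intro tendsto_intros QWY QXY PXY)
  then have "(\<lambda>n. Re (cinner (y n) (y n))) \<longlonglongrightarrow> Re 0"
    by (intro tendsto_intros) simp
  then have "(\<lambda>n. (norm (y n))\<^sup>2) \<longlonglongrightarrow> 0" by (simp add: Re_cinner_self)
  then have "(\<lambda>n. sqrt ((norm (y n))\<^sup>2)) \<longlonglongrightarrow> sqrt 0" by (rule tendsto_real_sqrt)
  then have ylim: "(\<lambda>n. norm (y n)) \<longlonglongrightarrow> 0" by simp
  define c where "c = sqrt (N\<^sup>2 - a\<^sup>2)"
  have c2: "c\<^sup>2 = N\<^sup>2 - a\<^sup>2"
    unfolding c_def using power_mono[OF aN abs_ge_zero, of 2] by simp
  define m where "m = Complex a c"
  define m' where "m' = Complex a (- c)"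
  have cm: "cmod m = N" unfolding m_def cmod_def using c2 N0 by simp
  have cm': "cmod m' = N" unfolding m'_def cmod_def using c2 N0 by simp
  have m1: "m' + m = of_real (2 * a)" by (simp add: m_def m'_def complex_eq_iff)
  have m2: "m * m' = of_real (N\<^sup>2)"
    using c2 by (simp add: m_def m'_def complex_eq_iff power2_eq_square)
  have fact: "y n = B (B (x n) - scaleC m' (x n)) - scaleC m (B (x n) - scaleC m' (x n))" for n
  proof -
    have "B (B (x n) - scaleC m' (x n)) - scaleC m (B (x n) - scaleC m' (x n))
        = B (B (x n)) - (scaleC m' (B (x n)) + scaleC m (B (x n))) + scaleC (m * m') (x n)"
      by (simp add: Bdiff Bscl scaleC_diff_right scaleC_scaleC algebra_simps)
    also have "\<dots> = y n"
      unfolding y_def by (simp only: scaleC_add_left[symmetric] m1 m2)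
    finally show ?thesis by simp
  qed
  show ?thesis
  proof (rule ccontr)
    assume nt: "\<not> ?thesis"
    have "\<not> (\<forall>e>0. \<exists>u. norm u = 1 \<and> norm (B u - scaleC m u) < e)" using nt cm by blast
    then obtain e1 where e1: "e1 > 0" "\<And>u. norm u = 1 \<Longrightarrow> e1 \<le> norm (B u - scaleC m u)"
      by (auto simp: not_less)
    have "\<not> (\<forall>e>0. \<exists>u. norm u = 1 \<and> norm (B u - scaleC m' u) < e)" using nt cm' by blast
    then obtain e2 where e2: "e2 > 0" "\<And>u. norm u = 1 \<Longrightarrow> e2 \<le> norm (B u - scaleC m' u)"
      by (auto simp: not_less)
    have low: "e1 * e2 \<le> norm (y n)" for n
    proof -
      have "e2 \<le> norm (B (x n) - scaleC m' (x n))" using e2(2) unit by blast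
      then have "e1 * e2 \<le> e1 * norm (B (x n) - scaleC m' (x n))"
        using e1(1) by simp
      also have "\<dots> \<le> norm (y n)" unfolding fact[of n] by (rule lower_extend[OF B e1(2)])
      finally show ?thesis .
    qed
    have "\<forall>\<^sub>F n in sequentially. norm (y n) < e1 * e2"
      using order_tendstoD(2)[OF ylim] e1(1) e2(1) by simp
    then obtain n where "norm (y n) < e1 * e2" using eventually_sequentially by auto
    with low[of n] show False by simp
  qed
qed



lemma sesq_expand2:
  fixes F :: "'a::complex_hilbert \<Rightarrow> 'a \<Rightarrow> complex"
  assumes addL: "\<And>u1 u2 v. F (u1 + u2) v = F u1 v + F u2 v"
    and addR: "\<And>u v1 v2. F u (v1 + v2) = F u v1 + F u v2"
    and sclL: "\<And>c u v. F (scaleC c u) v = c * F u v"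
    and sclR: "\<And>c u v. F u (scaleC c v) = cnj c * F u v"
  shows "F (scaleC p u + scaleC q v) (scaleC p u + scaleC q v)
    = p * cnj p * F u u + p * cnj q * F u v + q * cnj p * F v u + q * cnj q * F v v"
  by (simp only: addL addR sclL sclR) (simp add: algebra_simps)

lemma numerical_range_convex:
  fixes A :: "'a::complex_hilbert \<Rightarrow> 'a"
  assumes A: "bounded_clinear_op A"
  shows "convex (numerical_range A)"
proof (rule convexI)
  fix p q :: complex and s t :: real
  assume pW: "p \<in> numerical_range A" and qW: "q \<in> numerical_range A"
    and s0: "0 \<le> s" and t0: "0 \<le> t" and st: "s + t = 1"
  obtain x where x: "norm x = 1" "p = cinner (A x) x" using pW unfolding numerical_range_def by blast
  obtain y where y: "norm y = 1" "q = cinner (A y) y" using qW unfolding numerical_range_def by blast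
  have hx: "cinner x x = 1" using x(1) by (simp add: cinner_self_norm)
  have hy: "cinner y y = 1" using y(1) by (simp add: cinner_self_norm)
  show "s *\<^sub>R p + t *\<^sub>R q \<in> numerical_range A"
  proof (cases "p = q")
    case True
    then have "s *\<^sub>R p + t *\<^sub>R q = p" using st by (simp add: scaleR_left_distrib[symmetric])
    then show ?thesis using pW by simp
  next
    case False
    then have qp: "q - p \<noteq> 0" by simp
    note Aadd = bco_add[OF A] and Ascl = bco_scaleC[OF A]
    define F where "F = (\<lambda>u v. (cinner (A u) v - p * cinner u v) / (q - p))"
    have FaddL: "F (u1 + u2) v = F u1 v + F u2 v" for u1 u2 v
      unfolding F_def by (simp add: Aadd lin_simps diff_divide_distrib add_divide_distrib algebra_simps)
    have FaddR: "F u (v1 + v2) = F u v1 + F u v2" for u v1 v2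
      unfolding F_def by (simp add: Aadd lin_simps diff_divide_distrib add_divide_distrib algebra_simps)
    have FsclL: "F (scaleC c u) v = c * F u v" for c u v
      unfolding F_def by (simp add: Ascl lin_simps algebra_simps times_divide_eq_right[symmetric])
    have FsclR: "F u (scaleC c v) = cnj c * F u v" for c u v
      unfolding F_def by (simp add: Ascl lin_simps algebra_simps times_divide_eq_right[symmetric])
    have Fsq: "F (scaleC c u) (scaleC c u) = c * cnj c * F u u" for c u
      by (simp add: FsclL FsclR)
    have Fxx: "F x x = 0" unfolding F_def using x hx by simp
    have Fyy: "F y y = 1" unfolding F_def using y hy qp by simp
    define g where "g = F x y"
    define h where "h = F y x"
    define d where "d = g - cnj h"
    define th where "th = (if d = 0 then 1 else d / of_real (cmod d))"
    have th1: "cmod th = 1" by (simp add: th_def norm_divide)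
    have thc: "th * cnj th = 1"
      using th1 complex_norm_square[of th] by simp
    define y' where "y' = scaleC th y"
    have ny': "norm y' = 1" by (simp add: y'_def norm_scaleC th1 y(1))
    have Fy'y': "F y' y' = 1" unfolding y'_def Fsq thc Fyy by simp
    define r where "r = F x y' + F y' x"
    have r_eq: "r = cnj th * g + th * h" by (simp add: r_def y'_def FsclL FsclR g_def h_def)
    have rIm: "Im r = 0"
    proof (cases "d = 0")
      case True
      then have "g = cnj h" by (simp add: d_def)
      then show ?thesis using True by (simp add: r_eq th_def)
    next
      case False
      have "Im r = Im (cnj th * d)" by (simp add: r_eq d_def algebra_simps)
      also have "cnj th * d = of_real (cmod d)"
      proof -
        have "cnj th * d = cnj d * d / of_real (cmod d)" using False by (simp add: th_def)
        also have "cnj d * d = of_real ((cmod d)\<^sup>2)" using complex_norm_square[of d] by (simp add: mult.commute)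
        finally show ?thesis using False by (simp add: power2_eq_square)
      qed
      finally show ?thesis by simp
    qed
    have rr: "r = of_real (Re r)" using rIm by (simp add: complex_eq_iff)
    define v where "v = (\<lambda>s'::real. (1 - s') *\<^sub>R x + s' *\<^sub>R y')"
    have v_alt: "v s' = scaleC (of_real (1 - s')) x + scaleC (of_real s') y'" for s'
      by (simp add: v_def scaleR_scaleC)
    have Fv: "F (v s') (v s') = of_real (s'\<^sup>2 + s' * (1 - s') * Re r)" for s'
    proof -
      have "F (v s') (v s') = of_real ((1 - s') * (1 - s')) * F x x + of_real ((1 - s') * s') * F x y'
          + of_real (s' * (1 - s')) * F y' x + of_real (s' * s') * F y' y'"
        unfolding v_alt by (subst sesq_expand2[OF FaddL FaddR FsclL FsclR]) simp
      also have "\<dots> = of_real (s' * s') + of_real (s' * (1 - s')) * r"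
        by (simp add: Fxx Fy'y' r_def algebra_simps)
      also have "\<dots> = of_real (s'\<^sup>2 + s' * (1 - s') * Re r)"
        by (subst rr) (simp add: power2_eq_square)
      finally show ?thesis .
    qed
    have vnz: "v s' \<noteq> 0" if "0 \<le> s'" "s' \<le> 1" for s'
    proof
      assume v0: "v s' = 0"
      then have eq: "scaleC (of_real (1 - s')) x = scaleC (- of_real s') y'"
        unfolding v_alt by (simp add: scaleC_minus_left add_eq_0_iff)
      have "F (scaleC (of_real (1 - s')) x) (scaleC (of_real (1 - s')) x)
          = F (scaleC (- of_real s') y') (scaleC (- of_real s') y')" by (simp only: eq)
      then have "of_real (s' * s') = (0::complex)" unfolding Fsq by (simp add: Fxx Fy'y')
      then have "s' = 0" by simp
      with v0 show False using x(1) by (simp add: v_def)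
    qed
    define gf where "gf = (\<lambda>s'. (s'\<^sup>2 + s' * (1 - s') * Re r) / (norm (v s'))\<^sup>2)"
    have cont: "continuous_on {0..1} gf"
      unfolding gf_def v_def
      by (intro continuous_intros) (use vnz in \<open>auto simp: v_def\<close>)
    have g0: "gf 0 = 0" by (simp add: gf_def)
    have g1: "gf 1 = 1" by (simp add: gf_def v_def ny')
    have t1: "t \<le> 1" using s0 st by simp
    obtain sg where sg: "0 \<le> sg" "sg \<le> 1" "gf sg = t"
      using IVT'[of gf 0 t 1] g0 g1 t0 t1 cont by auto
    define z where "z = scaleC (of_real (1 / norm (v sg))) (v sg)"
    have nvpos: "norm (v sg) > 0" using vnz[OF sg(1,2)] by simp
    have nz: "norm z = 1" using nvpos by (simp add: z_def norm_scaleC norm_divide)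
    have hz: "cinner z z = 1" using nz by (simp add: cinner_self_norm)
    have Fzz: "F z z = of_real t"
    proof -
      have "F z z = of_real (1 / norm (v sg)) * of_real (1 / norm (v sg)) * F (v sg) (v sg)"
        unfolding z_def Fsq by simp
      also have "\<dots> = of_real (gf sg)"
        by (simp add: Fv gf_def power2_eq_square)
      finally show ?thesis using sg(3) by simp
    qed
    have "cinner (A z) z = p + of_real t * (q - p)"
      using Fzz hz qp unfolding F_def by (simp add: field_simps)
    also have "\<dots> = s *\<^sub>R p + t *\<^sub>R q"
    proof -
      have s1: "s = 1 - t" using st by simp
      show ?thesis by (simp add: s1 scaleR_conv_of_real algebra_simps)
    qed
    finally show ?thesis unfolding numerical_range_def using nz by force
  qed
qed



lemma approx_in_spectrum:
  fixes A :: "'a::complex_hilbert \<Rightarrow> 'a"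
  assumes A: "bounded_clinear_op A"
    and ap: "\<forall>e>0. \<exists>u. norm u = 1 \<and> norm (A u - scaleC m u) < e"
  shows "m \<in> op_spectrum A"
  unfolding op_spectrum_def
proof (clarify)
  fix B assume B: "bounded_clinear_op B" and BT: "\<forall>x. B (A x - scaleC m x) = x"
  define K where "K = onorm B"
  have K0: "0 \<le> K" using bco_onorm_nonneg[OF B] by (simp add: K_def)
  obtain u where u: "norm u = 1" "norm (A u - scaleC m u) < 1 / (K + 1)"
    using ap K0 by (metis add_nonneg_pos zero_less_divide_1_iff zero_less_one)
  have "1 = norm (B (A u - scaleC m u))" using BT u(1) by simp
  also have "\<dots> \<le> K * norm (A u - scaleC m u)" using bco_norm[OF B] by (simp add: K_def)
  also have "\<dots> \<le> K * (1 / (K + 1))" using u(2) K0 by (intro mult_left_mono) auto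
  also have "\<dots> < 1" using K0 by (simp add: field_simps)
  finally show False by simp
qed

lemma bco_intro:
  fixes T :: "'a::complex_hilbert \<Rightarrow> 'a"
  assumes add: "\<And>x y. T (x + y) = T x + T y"
    and scl: "\<And>c x. T (scaleC c x) = scaleC c (T x)"
    and bnd: "\<And>x. norm (T x) \<le> norm x * K"
  shows "bounded_clinear_op T"
  unfolding bounded_clinear_op_def
proof (intro conjI allI)
  show "bounded_linear T"
    by (rule bounded_linear_intro[OF add _ bnd]) (simp add: scaleR_scaleC scl)
qed (rule scl)

lemma spectrum_approx:
  fixes A :: "'a::complex_hilbert \<Rightarrow> 'a"
  assumes A: "bounded_clinear_op A" and ne: "\<exists>x::'a. x \<noteq> 0"
    and sp: "m \<in> op_spectrum A" and cm: "cmod m = onorm A"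
  shows "\<forall>e>0. \<exists>u. norm u = 1 \<and> norm (A u - scaleC m u) < e"
proof (rule ccontr)
  assume "\<not> ?thesis"
  then obtain e where e0: "e > 0" and lowu: "\<And>u. norm u = 1 \<Longrightarrow> e \<le> norm (A u - scaleC m u)"
    by (auto simp: not_less)
  note Aadd = bco_add[OF A] and Ascl = bco_scaleC[OF A] and Adiff = bco_diff[OF A]
  have low: "e * norm z \<le> norm (A z - scaleC m z)" for z by (rule lower_extend[OF A lowu])
  define N where "N = onorm A"
  have N0: "0 \<le> N" using bco_onorm_nonneg[OF A] by (simp add: N_def)
  have An: "norm (A v) \<le> N * norm v" for v using bco_norm[OF A] by (simp add: N_def)
  have Npos: "N > 0"
  proof (rule ccontr)
    assume "\<not> N > 0"
    then have "N = 0" using N0 by simp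
    then have "\<forall>x. A x = 0" using onorm_eq_0[OF bco_bl[OF A]] by (simp add: N_def)
    moreover have "m = 0" using cm \<open>N = 0\<close> by (simp add: N_def)
    moreover obtain x0 :: 'a where "x0 \<noteq> 0" using ne by blast
    moreover have "0 < e * norm x0" using e0 \<open>x0 \<noteq> 0\<close> by simp
    ultimately show False using low[of x0] by simp
  qed
  have m0: "m \<noteq> 0" using Npos cm by (auto simp: N_def)
  define d where "d = e / 3"
  have d0: "d > 0" using e0 by (simp add: d_def)
  define mu where "mu = m * of_real (1 + d / N)"
  have pos: "0 < 1 + d / N" using Npos d0 by (simp add: add_pos_pos)
  have "cmod mu = cmod m * \<bar>1 + d / N\<bar>"
    unfolding mu_def norm_mult by (simp only: norm_of_real)
  also have "\<dots> = N * (1 + d / N)" using pos cm by (simp add: N_def)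
  also have "\<dots> = N + d" using Npos by (simp add: field_simps)
  finally have cmu: "cmod mu = N + d" .
  have mu0: "mu \<noteq> 0" using cmu Npos d0 by auto
  have cmd: "cmod (mu - m) = d"
  proof -
    have "mu - m = m * of_real (d / N)" by (simp add: mu_def algebra_simps)
    then have "cmod (mu - m) = cmod m * \<bar>d / N\<bar>" by (simp only: norm_mult norm_of_real)
    then show ?thesis using cm Npos d0 by (simp add: N_def)
  qed
  have lowmu: "(2 * e / 3) * norm z \<le> norm (A z - scaleC mu z)" for z
  proof -
    have eq: "A z - scaleC mu z = (A z - scaleC m z) - scaleC (mu - m) z"
      by (simp add: scaleC_diff_left)
    have "norm (A z - scaleC m z) - norm (scaleC (mu - m) z) \<le> norm (A z - scaleC mu z)"
      unfolding eq by (rule norm_triangle_ineq2)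
    then show ?thesis using low[of z] by (simp add: norm_scaleC cmd d_def algebra_simps)
  qed
  have surjmu: "\<exists>u. A u - scaleC mu u = z" for z
  proof -
    define G where "G = (\<lambda>u. scaleC (1 / mu) (A u - z))"
    have "\<exists>!u. G u = u"
    proof (rule banach_fix_type[where c = "N / (N + d)"])
      show "0 \<le> N / (N + d)" using N0 d0 by simp
      show "N / (N + d) < 1" using N0 d0 by simp
      show "\<forall>u v. dist (G u) (G v) \<le> N / (N + d) * dist u v"
      proof (intro allI)
        fix u v
        have "G u - G v = scaleC (1 / mu) (A (u - v))"
          by (simp add: G_def Adiff scaleC_diff_right)
        then have "dist (G u) (G v) = norm (A (u - v)) / (N + d)"
          by (simp add: dist_norm norm_scaleC norm_divide cmu)
        also have "\<dots> \<le> N * norm (u - v) / (N + d)"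
          using An[of "u - v"] N0 d0 by (simp add: divide_right_mono)
        finally show "dist (G u) (G v) \<le> N / (N + d) * dist u v" by (simp add: dist_norm)
      qed
    qed
    then obtain u where "G u = u" by blast
    then have "scaleC mu (G u) = scaleC mu u" by simp
    then have "A u - z = scaleC mu u" using mu0 by (simp add: G_def scaleC_scaleC scaleC_one)
    then show ?thesis by (intro exI[of _ u]) (simp add: algebra_simps)
  qed
  define R where "R = (\<lambda>z. SOME u. A u - scaleC mu u = z)"
  have RA: "A (R z) - scaleC mu (R z) = z" for z
    unfolding R_def by (rule someI_ex[OF surjmu])
  have Rlip: "norm (R z - R z') \<le> (3 / (2 * e)) * norm (z - z')" for z z'
  proof -
    have "A (R z - R z') - scaleC mu (R z - R z') = z - z'"
      using RA[of z] RA[of z'] by (simp add: Adiff scaleC_diff_right algebra_simps)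
    then have "(2 * e / 3) * norm (R z - R z') \<le> norm (z - z')" using lowmu[of "R z - R z'"] by simp
    then show ?thesis using e0 by (simp add: field_simps)
  qed
  have surj: "\<exists>u. A u - scaleC m u = yy" for yy
  proof -
    define G where "G = (\<lambda>z. yy - scaleC (mu - m) (R z))"
    have "\<exists>!z. G z = z"
    proof (rule banach_fix_type[where c = "1 / 2"])
      show "\<forall>u v. dist (G u) (G v) \<le> 1 / 2 * dist u v"
      proof (intro allI)
        fix u v
        have "G u - G v = - scaleC (mu - m) (R u - R v)"
          by (simp add: G_def scaleC_diff_right)
        then have "dist (G u) (G v) = d * norm (R u - R v)"
          by (simp add: dist_norm norm_scaleC cmd norm_minus_cancel[of "G u - G v", symmetric])
        also have "\<dots> \<le> d * ((3 / (2 * e)) * norm (u - v))"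
          using Rlip[of u v] d0 by (intro mult_left_mono) auto
        also have "\<dots> = 1 / 2 * dist u v" using e0 by (simp add: d_def dist_norm)
        finally show "dist (G u) (G v) \<le> 1 / 2 * dist u v" .
      qed
    qed auto
    then obtain z where z: "G z = z" by blast
    have "A (R z) - scaleC m (R z) = (A (R z) - scaleC mu (R z)) + scaleC (mu - m) (R z)"
      by (simp add: scaleC_diff_left)
    also have "\<dots> = z + scaleC (mu - m) (R z)" by (simp add: RA)
    also have "\<dots> = yy" using z by (simp add: G_def algebra_simps)
    finally show ?thesis by blast
  qed
  define T where "T = (\<lambda>u. A u - scaleC m u)"
  have Tadd: "T (u + v) = T u + T v" for u v by (simp add: T_def Aadd scaleC_add_right algebra_simps)
  have Tscl: "T (scaleC c u) = scaleC c (T u)" for c u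
    by (simp add: T_def Ascl scaleC_diff_right scaleC_scaleC mult.commute)
  have Tdiff: "T (u - v) = T u - T v" for u v by (simp add: T_def Adiff scaleC_diff_right algebra_simps)
  have Tinj: "u = v" if "T u = T v" for u v
  proof -
    have "e * norm (u - v) \<le> norm (T (u - v))" using low by (simp add: T_def)
    also have "\<dots> = 0" using that by (simp add: Tdiff)
    finally show ?thesis using e0 by (simp add: mult_le_0_iff)
  qed
  define Bi where "Bi = (\<lambda>yy. SOME u. T u = yy)"
  have TB: "T (Bi yy) = yy" for yy
    unfolding Bi_def T_def by (rule someI_ex) (rule surj)
  have BT: "Bi (T u) = u" for u by (rule Tinj) (simp add: TB)
  have Bco: "bounded_clinear_op Bi"
  proof (rule bco_intro[where K = "1 / e"])
    show "Bi (a + b) = Bi a + Bi b" for a b by (rule Tinj) (simp add: TB Tadd)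
    show "Bi (scaleC c a) = scaleC c (Bi a)" for c a by (rule Tinj) (simp add: TB Tscl)
    show "norm (Bi a) \<le> norm a * (1 / e)" for a
    proof -
      have "e * norm (Bi a) \<le> norm a" using low[of "Bi a"] TB[of a] by (simp add: T_def)
      then show ?thesis using e0 by (simp add: field_simps)
    qed
  qed
  have "m \<notin> op_spectrum A"
    unfolding op_spectrum_def using Bco TB BT by (auto simp: T_def)
  with sp show False by simp
qed



lemma support_line:
  fixes S :: "complex set"
  assumes cv: "convex S" and zc: "z \<in> closure S" and zi: "z \<notin> interior S"
  shows "\<exists>w. cmod w = 1 \<and> (\<forall>y\<in>S. Re (cnj w * y) \<le> Re (cnj w * z))"
proof -
  have key: "Re (cnj (c / of_real (cmod c)) * y) = (c \<bullet> y) / cmod c" for c y :: complex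
  proof -
    have "cnj (c / of_real (cmod c)) * y = (cnj c * y) / of_real (cmod c)" by simp
    then show ?thesis by (simp add: Re_divide_of_real inner_complex_def)
  qed
  show ?thesis
  proof (cases "interior S = {}")
    case True
    obtain a b where a: "a \<noteq> 0" "S \<subseteq> {x. a \<bullet> x = b}"
      using empty_interior_subset_hyperplane[OF cv True] by blast
    have "closure S \<subseteq> {x. a \<bullet> x = b}" by (rule closure_minimal[OF a(2)]) (simp add: closed_hyperplane)
    with zc have az: "a \<bullet> z = b" by auto
    show ?thesis
    proof (intro exI conjI ballI)
      show "cmod (a / of_real (cmod a)) = 1" using a(1) by (simp add: norm_divide)
      fix y assume "y \<in> S"
      then have ayz: "a \<bullet> y = a \<bullet> z" using a(2) az by auto
      show "Re (cnj (a / of_real (cmod a)) * y) \<le> Re (cnj (a / of_real (cmod a)) * z)"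
        by (simp only: key ayz order_refl)
    qed
  next
    case False
    have "interior S = rel_interior S" using False interior_rel_interior_gen[of S] by metis
    with zi have zr: "z \<notin> rel_interior S" by simp
    obtain a where a: "a \<noteq> 0" "\<And>y. y \<in> closure S \<Longrightarrow> a \<bullet> z \<le> a \<bullet> y"
    proof (rule supporting_hyperplane_relative_frontier[OF cv zc zr])
      fix a assume h: "a \<noteq> 0" "\<And>y. y \<in> closure S \<Longrightarrow> a \<bullet> z \<le> a \<bullet> y"
        "\<And>y. y \<in> rel_interior S \<Longrightarrow> a \<bullet> z < a \<bullet> y"
      show thesis using h(1,2) by (rule that)
    qed
    show ?thesis
    proof (intro exI conjI ballI)
      show "cmod ((- a) / of_real (cmod (- a))) = 1" using a(1) by (simp add: norm_divide)
      fix y assume "y \<in> S"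
      then have ay: "a \<bullet> z \<le> a \<bullet> y" by (rule a(2)[OF subsetD[OF closure_subset]])
      have "(- a) \<bullet> y / cmod (- a) \<le> (- a) \<bullet> z / cmod (- a)"
        by (rule divide_right_mono) (use ay in \<open>simp_all only: inner_minus_left neg_le_iff_le norm_ge_zero\<close>)
      then show "Re (cnj ((- a) / of_real (cmod (- a))) * y) \<le> Re (cnj ((- a) / of_real (cmod (- a))) * z)"
        by (simp only: key)
    qed
  qed
qed

theorem theorem2:
  fixes A :: "'a::complex_hilbert \<Rightarrow> 'a"
  assumes "\<exists>x::'a. x \<noteq> 0"
    and "bounded_clinear_op A"
  shows "max_numerical_range A \<inter> frontier (numerical_range A) \<noteq> {} \<longleftrightarrow> normaloid A"
proof
  note ne = assms(1) and A = assms(2)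
  note Aadd = bco_add[OF A] and Ascl = bco_scaleC[OF A]
  assume "max_numerical_range A \<inter> frontier (numerical_range A) \<noteq> {}"
  then obtain l where l0: "l \<in> max_numerical_range A" and lf: "l \<in> frontier (numerical_range A)" by blast
  obtain x where xu: "\<forall>n. norm (x n) = 1" and xl1: "(\<lambda>n. norm (A (x n))) \<longlonglongrightarrow> onorm A"
      and xl2: "(\<lambda>n. cinner (A (x n)) (x n)) \<longlonglongrightarrow> l"
    using l0 unfolding max_numerical_range_def by blast
  have lc: "l \<in> closure (numerical_range A)" and li: "l \<notin> interior (numerical_range A)"
    using lf by (auto simp: frontier_def)
  obtain w where w1: "cmod w = 1"
      and wsup: "\<forall>y\<in>numerical_range A. Re (cnj w * y) \<le> Re (cnj w * l)"
    using support_line[OF numerical_range_convex[OF A] lc li] by blast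
  have wc: "w * cnj w = 1" using w1 complex_norm_square[of w] by simp
  define B where "B = (\<lambda>v. scaleC (cnj w) (A v))"
  have nB: "norm (B v) = norm (A v)" for v using w1 by (simp add: B_def norm_scaleC)
  have Bco: "bounded_clinear_op B"
  proof (rule bco_intro[where K = "onorm A"])
    show "B (u + v) = B u + B v" for u v by (simp add: B_def Aadd scaleC_add_right)
    show "B (scaleC c u) = scaleC c (B u)" for c u by (simp add: B_def Ascl scaleC_scaleC mult.commute)
    show "norm (B u) \<le> norm u * onorm A" for u using bco_norm[OF A, of u] by (simp add: nB mult.commute)
  qed
  have oB: "onorm A = onorm B" unfolding onorm_def by (simp add: nB)
  have cB: "cinner (B v) v = cnj w * cinner (A v) v" for v by (simp add: B_def cinner_scaleC_left)
  have "\<exists>mm. cmod mm = onorm A \<and> (\<forall>e>0. \<exists>u. norm u = 1 \<and> norm (B u - scaleC mm u) < e)"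
  proof (rule core[OF Bco oB])
    show "norm (x n) = 1" for n using xu by simp
    show "(\<lambda>n. norm (B (x n))) \<longlonglongrightarrow> onorm A" using xl1 by (simp add: nB)
    show "(\<lambda>n. Re (cinner (B (x n)) (x n))) \<longlonglongrightarrow> Re (cnj w * l)"
      unfolding cB by (intro tendsto_intros xl2)
    show "Re (cinner (B v) v) \<le> Re (cnj w * l)" if "norm v = 1" for v
      using wsup that unfolding cB numerical_range_def by blast
  qed
  then obtain mm where cmm: "cmod mm = onorm A"
      and apB: "\<forall>e>0. \<exists>u. norm u = 1 \<and> norm (B u - scaleC mm u) < e" by blast
  have eqA: "A u - scaleC (w * mm) u = scaleC w (B u - scaleC mm u)" for u
    by (simp add: B_def scaleC_diff_right scaleC_scaleC wc scaleC_one)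
  have "w * mm \<in> op_spectrum A"
  proof (rule approx_in_spectrum[OF A], intro allI impI)
    fix e :: real assume "e > 0"
    then obtain u where "norm u = 1" "norm (B u - scaleC mm u) < e" using apB by blast
    then show "\<exists>u. norm u = 1 \<and> norm (A u - scaleC (w * mm) u) < e"
      by (intro exI[of _ u]) (simp add: eqA norm_scaleC w1)
  qed
  moreover have "cmod (w * mm) = onorm A" by (simp add: norm_mult w1 cmm)
  ultimately show "normaloid A" unfolding normaloid_def by blast
next
  note ne = assms(1) and A = assms(2)
  assume "normaloid A"
  then obtain m where sp: "m \<in> op_spectrum A" and cm: "cmod m = onorm A"
    unfolding normaloid_def by blast
  have ap: "\<forall>e>0. \<exists>u. norm u = 1 \<and> norm (A u - scaleC m u) < e"
    by (rule spectrum_approx[OF A ne sp cm])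
  have "\<forall>n. \<exists>u. norm u = 1 \<and> norm (A u - scaleC m u) < inverse (real (Suc n))"
    using ap by simp
  then have "\<exists>x. \<forall>n. norm (x n) = 1 \<and> norm (A (x n) - scaleC m (x n)) < inverse (real (Suc n))"
    by (rule choice)
  then obtain x where x: "\<forall>n. norm (x n) = 1 \<and> norm (A (x n) - scaleC m (x n)) < inverse (real (Suc n))"
    by blast
  have xu: "norm (x n) = 1" for n using x by simp
  have hx: "cinner (x n) (x n) = 1" for n using xu[of n] by (simp add: cinner_self_norm)
  have d0: "(\<lambda>n. norm (A (x n) - scaleC m (x n))) \<longlonglongrightarrow> 0"
  proof (rule Lim_null_comparison[OF _ LIMSEQ_inverse_real_of_nat])
    show "\<forall>\<^sub>F n in sequentially. norm (norm (A (x n) - scaleC m (x n))) \<le> inverse (real (Suc n))"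
      using x by (intro always_eventually allI) (simp add: less_imp_le)
  qed
  have "(\<lambda>n. norm (A (x n)) - cmod m) \<longlonglongrightarrow> 0"
  proof (rule Lim_null_comparison[OF _ d0])
    show "\<forall>\<^sub>F n in sequentially. norm (norm (A (x n)) - cmod m) \<le> norm (A (x n) - scaleC m (x n))"
    proof (intro always_eventually allI)
      fix n
      have "norm (scaleC m (x n)) = cmod m" by (simp add: norm_scaleC xu)
      then show "norm (norm (A (x n)) - cmod m) \<le> norm (A (x n) - scaleC m (x n))"
        using norm_triangle_ineq3[of "A (x n)" "scaleC m (x n)"] by simp
    qed
  qed
  then have "(\<lambda>n. (norm (A (x n)) - cmod m) + cmod m) \<longlonglongrightarrow> 0 + cmod m"
    by (intro tendsto_intros)
  then have lim1: "(\<lambda>n. norm (A (x n))) \<longlonglongrightarrow> onorm A" using cm by simp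
  have "(\<lambda>n. cinner (A (x n)) (x n) - m) \<longlonglongrightarrow> 0"
  proof (rule Lim_null_comparison[OF _ d0])
    show "\<forall>\<^sub>F n in sequentially. norm (cinner (A (x n)) (x n) - m) \<le> norm (A (x n) - scaleC m (x n))"
    proof (intro always_eventually allI)
      fix n
      have "cinner (A (x n)) (x n) - m = cinner (A (x n) - scaleC m (x n)) (x n)"
        by (simp add: lin_simps hx)
      then show "norm (cinner (A (x n)) (x n) - m) \<le> norm (A (x n) - scaleC m (x n))"
        using cauchy_schwarz[of "A (x n) - scaleC m (x n)" "x n"] by (simp add: xu)
    qed
  qed
  then have "(\<lambda>n. (cinner (A (x n)) (x n) - m) + m) \<longlonglongrightarrow> 0 + m"
    by (intro tendsto_intros)
  then have lim2: "(\<lambda>n. cinner (A (x n)) (x n)) \<longlonglongrightarrow> m" by simp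
  have m0: "m \<in> max_numerical_range A"
    unfolding max_numerical_range_def using xu lim1 lim2 by blast
  have inW: "cinner (A (x n)) (x n) \<in> numerical_range A" for n
    unfolding numerical_range_def using xu by blast
  have mc: "m \<in> closure (numerical_range A)"
    unfolding closure_sequential
    by (intro exI[of _ "\<lambda>n. cinner (A (x n)) (x n)"]) (use inW lim2 in auto)
  have mi: "m \<notin> interior (numerical_range A)"
  proof
    assume "m \<in> interior (numerical_range A)"
    then obtain r where r0: "r > 0" and rb: "ball m r \<subseteq> numerical_range A"
      unfolding mem_interior by blast
    define zt where "zt = (if m = 0 then 1 else m / of_real (cmod m))"
    define z where "z = m + of_real (r / 2) * zt"
    have cz: "cmod z = cmod m + r / 2"
    proof (cases "m = 0")
      case True then show ?thesis using r0 by (simp add: z_def zt_def)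
    next
      case False
      have "z = m * of_real (1 + r / (2 * cmod m))"
        using False by (simp add: z_def zt_def field_simps)
      then have "cmod z = cmod m * \<bar>1 + r / (2 * cmod m)\<bar>"
        by (simp only: norm_mult norm_of_real)
      moreover have "0 < 1 + r / (2 * cmod m)" using r0 False by (simp add: add_pos_pos)
      ultimately have "cmod z = cmod m * (1 + r / (2 * cmod m))" by simp
      also have "cmod m * (1 + r / (2 * cmod m)) = cmod m + r / 2" using False by (simp add: field_simps)
      finally show ?thesis .
    qed
    have "dist m z = r / 2"
    proof -
      have "cmod zt = 1" by (simp add: zt_def norm_divide)
      then show ?thesis using r0 by (simp add: dist_norm z_def norm_mult)
    qed
    then have "z \<in> numerical_range A" using rb r0 by auto
    then obtain v where "norm v = 1" "z = cinner (A v) v" unfolding numerical_range_def by blast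
    then have "cmod z \<le> onorm A" using bco_cinner_le[OF A] by simp
    then show False using cz cm r0 by simp
  qed
  have "m \<in> frontier (numerical_range A)" using mc mi by (simp add: frontier_def)
  with m0 show "max_numerical_range A \<inter> frontier (numerical_range A) \<noteq> {}" by blast
qed


end
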